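(* Fix a test example $z'$ and $\lambda>0$. Assume $F_S\,\nabla_\theta f(z',\theta_S^* )\neq0$ and $\mathrm{Var}_{A\sim D_a}[f(z',\theta_A^* )]>0$. Then $\dot c_p(\lambda;z')>0$ if and only if $$r_{z',\lambda}\, t_{3,z',\lambda}>\Big(-\nabla_\theta f(z',\theta_S^* )^\top(F_S+\lambda I_p)^{-2}g_{z'}\Big)\, t_{2,z',\lambda}.$$
   Context: Let $n\ge 2$ and let $S=\{z_1,\dots,z_n\}$ be a training set. For parameters $\theta\in\mathbb{R}^p$, let $L(z,\theta)>0$ be a loss that is differentiable in $\theta$. Set $p(z,\theta):=e^{-L(z,\theta)}\in(0,1)$ and $f(z,\theta):=\ln\frac{p(z,\theta)}{1-p(z,\theta)}$. Let $\theta_S^*$ satisfy $\sum_{i=1}^n\nabla_\theta L(z_i,\theta_S^* )=0$. For every subset $A\subseteq S$, let $\theta_A^*\in\mathbb{R}^p$ be a fixed parameter vector. Fix $1\le a<n$, and let $D_a$ be the uniform distribution over the size-$a$ subsets of $S$. Let $J\in\mathbb{R}^{n\times p}$ have $i$-th row $\nabla_\theta L(z_i,\theta_S^* )^\top$, and let $F_S:=\frac1nJ^\top J$. For $\lambda>0$ define $\tau_\lambda(z',z):=-\nabla_\theta f(z',\theta_S^* )^\top(F_S+\lambda I_p)^{-1}\nabla_\theta L(z,\theta_S^* )$. Let $c_p(\lambda;z')$ be the Pearson correlation, under $A\sim D_a$, between $f(z',\theta_A^* )$ and $\sum_{z\in A}\tau_\lambda(z',z)$, and let $\dot c_p(\lambda;z'):=\partial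 c_p(\lambda;z')/\partial\lambda$. Define: - $\alpha_{z',i}:=\mathbb{E}_{A\sim D_a}[f(z',\theta_A^* )\mid z_i\in A]-\mathbb{E}_{A\sim D_a}[f(z',\theta_A^* )]$; - $g_{z'}:=\frac1n\sum_i\alpha_{z',i}\nabla_\theta L(z_i,\theta_S^* )$; - $t_{k,z',\lambda}:=\nabla_\theta f(z',\theta_S^* )^\top(F_S+\lambda I_p)^{-k}F_S\nabla_\theta f(z',\theta_S^* )$; - $r_{z',\lambda}:=-\nabla_\theta f(z',\theta_S^* )^\top(F_S+\lambda I_p)^{-1}g_{z'}$. *)

theory Defs
  imports "HOL-Analysis.Analysis"
begin

definition grad :: "(real^'p \<Rightarrow> real) \<Rightarrow> real^'p \<Rightarrow> real^'p" where
  "grad F x = (THE D. GDERIV F x :> D)"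

definition logit_f :: "('z \<Rightarrow> real^'p \<Rightarrow> real) \<Rightarrow> 'z \<Rightarrow> real^'p \<Rightarrow> real" where
  "logit_f L z \<theta> = (let q = exp (- L z \<theta>) in ln (q / (1 - q)))"

text \<open>Support of D_a: the size-a subsets of S.\<close>
definition size_subsets :: "'z set \<Rightarrow> nat \<Rightarrow> 'z set set" where
  "size_subsets S a = {A. A \<subseteq> S \<and> card A = a}"

definition unif_exp :: "'z set set \<Rightarrow> ('z set \<Rightarrow> real) \<Rightarrow> real" where
  "unif_exp D X = (\<Sum>A\<in>D. X A) / real (card D)"

definition unif_var :: "'z set set \<Rightarrow> ('z set \<Rightarrow> real) \<Rightarrow> real" where
  "unif_var D X = unif_exp D (\<lambda>A. (X A - unif_exp D X)\<^sup>2)"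

definition unif_cov :: "'z set set \<Rightarrow> ('z set \<Rightarrow> real) \<Rightarrow> ('z set \<Rightarrow> real) \<Rightarrow> real" where
  "unif_cov D X Y = unif_exp D (\<lambda>A. (X A - unif_exp D X) * (Y A - unif_exp D Y))"

definition pearson :: "'z set set \<Rightarrow> ('z set \<Rightarrow> real) \<Rightarrow> ('z set \<Rightarrow> real) \<Rightarrow> real" where
  "pearson D X Y = unif_cov D X Y / (sqrt (unif_var D X) * sqrt (unif_var D Y))"

definition outer :: "real^'p \<Rightarrow> real^'p \<Rightarrow> real^'p^'p" where
  "outer u v = (\<chi> i j. u $ i * v $ j)"

text \<open>F_S = (1/n) J^T J, J having rows grad L(z_i, thetaS)^T, i = 0..n-1.\<close>
definition fisher :: "('z \<Rightarrow> real^'p \<Rightarrow> real) \<Rightarrow> (nat \<Rightarrow> 'z) \<Rightarrow> nat \<Rightarrow> real^'p \<Rightarrow> real^'p^'p" where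
  "fisher L z n \<theta>S = (1 / real n) *\<^sub>R (\<Sum>i<n. outer (grad (L (z i)) \<theta>S) (grad (L (z i)) \<theta>S))"

fun mpow :: "real^'p^'p \<Rightarrow> nat \<Rightarrow> real^'p^'p" where
  "mpow M 0 = mat 1"
| "mpow M (Suc k) = M ** mpow M k"

definition reg_inv :: "('z \<Rightarrow> real^'p \<Rightarrow> real) \<Rightarrow> (nat \<Rightarrow> 'z) \<Rightarrow> nat \<Rightarrow> real^'p \<Rightarrow> real \<Rightarrow> real^'p^'p" where
  "reg_inv L z n \<theta>S lam = matrix_inv (fisher L z n \<theta>S + lam *\<^sub>R mat 1)"

definition tau :: "('z \<Rightarrow> real^'p \<Rightarrow> real) \<Rightarrow> (nat \<Rightarrow> 'z) \<Rightarrow> nat \<Rightarrow> real^'p \<Rightarrow> real \<Rightarrow> 'z \<Rightarrow> 'z \<Rightarrow> real" where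
  "tau L z n \<theta>S lam z' \<zeta> =
     - (grad (logit_f L z') \<theta>S \<bullet> (reg_inv L z n \<theta>S lam *v grad (L \<zeta>) \<theta>S))"

definition c_p :: "('z \<Rightarrow> real^'p \<Rightarrow> real) \<Rightarrow> (nat \<Rightarrow> 'z) \<Rightarrow> nat \<Rightarrow> nat \<Rightarrow> real^'p
    \<Rightarrow> ('z set \<Rightarrow> real^'p) \<Rightarrow> 'z \<Rightarrow> real \<Rightarrow> real" where
  "c_p L z n a \<theta>S \<theta>A z' lam =
     pearson (size_subsets (z ` {..<n}) a) (\<lambda>A. logit_f L z' (\<theta>A A))
       (\<lambda>A. \<Sum>\<zeta>\<in>A. tau L z n \<theta>S lam z' \<zeta>)"

definition alpha :: "('z \<Rightarrow> real^'p \<Rightarrow> real) \<Rightarrow> (nat \<Rightarrow> 'z) \<Rightarrow> nat \<Rightarrow> nat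
    \<Rightarrow> ('z set \<Rightarrow> real^'p) \<Rightarrow> 'z \<Rightarrow> nat \<Rightarrow> real" where
  "alpha L z n a \<theta>A z' i =
     unif_exp {A \<in> size_subsets (z ` {..<n}) a. z i \<in> A} (\<lambda>A. logit_f L z' (\<theta>A A))
     - unif_exp (size_subsets (z ` {..<n}) a) (\<lambda>A. logit_f L z' (\<theta>A A))"

definition g_vec :: "('z \<Rightarrow> real^'p \<Rightarrow> real) \<Rightarrow> (nat \<Rightarrow> 'z) \<Rightarrow> nat \<Rightarrow> nat \<Rightarrow> real^'p
    \<Rightarrow> ('z set \<Rightarrow> real^'p) \<Rightarrow> 'z \<Rightarrow> real^'p" where
  "g_vec L z n a \<theta>S \<theta>A z' =
     (1 / real n) *\<^sub>R (\<Sum>i<n. alpha L z n a \<theta>A z' i *\<^sub>R grad (L (z i)) \<theta>S)"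

definition t_val :: "nat \<Rightarrow> ('z \<Rightarrow> real^'p \<Rightarrow> real) \<Rightarrow> (nat \<Rightarrow> 'z) \<Rightarrow> nat \<Rightarrow> real^'p
    \<Rightarrow> 'z \<Rightarrow> real \<Rightarrow> real" where
  "t_val k L z n \<theta>S z' lam =
     grad (logit_f L z') \<theta>S \<bullet>
       ((mpow (reg_inv L z n \<theta>S lam) k ** fisher L z n \<theta>S) *v grad (logit_f L z') \<theta>S)"

definition r_val :: "('z \<Rightarrow> real^'p \<Rightarrow> real) \<Rightarrow> (nat \<Rightarrow> 'z) \<Rightarrow> nat \<Rightarrow> nat \<Rightarrow> real^'p
    \<Rightarrow> ('z set \<Rightarrow> real^'p) \<Rightarrow> 'z \<Rightarrow> real \<Rightarrow> real" where
  "r_val L z n a \<theta>S \<theta>A z' lam =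
     - (grad (logit_f L z') \<theta>S \<bullet> (reg_inv L z n \<theta>S lam *v g_vec L z n a \<theta>S \<theta>A z'))"

end

theory Submission
  imports Defs
begin

lemma Amul: "((F::real^'p^'p) + m *\<^sub>R mat 1) *v x = F *v x + m *\<^sub>R x"
  by (simp add: matrix_vector_mult_add_rdistrib scaleR_matrix_vector_assoc[symmetric])

lemma inv_ok:
  fixes F :: "real^'p^'p"
  assumes psd: "\<And>x. 0 \<le> x \<bullet> (F *v x)" and m: "m > 0"
  shows "(F + m *\<^sub>R mat 1) ** matrix_inv (F + m *\<^sub>R mat 1) = mat 1 \<and>
         matrix_inv (F + m *\<^sub>R mat 1) ** (F + m *\<^sub>R mat 1) = mat 1"
proof -
  let ?A = "F + m *\<^sub>R mat 1"
  have "\<forall>x. ?A *v x = 0 \<longrightarrow> x = 0"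
  proof (intro allI impI)
    fix x assume "?A *v x = 0"
    then have "x \<bullet> (?A *v x) = 0" by simp
    then have "x \<bullet> (F *v x) + m * (x \<bullet> x) = 0" by (simp add: Amul inner_add_right)
    then have "m * (x \<bullet> x) \<le> 0" using psd[of x] by linarith
    then have "x \<bullet> x \<le> 0" using m by (simp add: mult_le_0_iff)
    then show "x = 0" by (metis inner_gt_zero_iff not_le)
  qed
  then obtain B where B: "B ** ?A = mat 1" using matrix_left_invertible_ker by blast
  then have "?A ** B = mat 1" using matrix_left_right_inverse by blast
  with B have ex: "\<exists>B. ?A ** B = mat 1 \<and> B ** ?A = mat 1" by blast
  show ?thesis unfolding matrix_inv_def by (rule someI_ex[OF ex])
qed

locale reg =
  fixes F :: "real^'p^'p"
  assumes psd: "\<And>x. 0 \<le> x \<bullet> (F *v x)"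
    and sym: "\<And>p q. (F *v p) \<bullet> q = p \<bullet> (F *v q)"
begin

definition Mi :: "real \<Rightarrow> real^'p^'p" where "Mi m = matrix_inv (F + m *\<^sub>R mat 1)"

lemma AM: "m > 0 \<Longrightarrow> F *v (Mi m *v y) + m *\<^sub>R (Mi m *v y) = y"
  using inv_ok[OF psd, of m] unfolding Mi_def
  by (metis Amul matrix_vector_mul_assoc matrix_vector_mul_lid)

lemma MA: "m > 0 \<Longrightarrow> Mi m *v (F *v y + m *\<^sub>R y) = y"
  using inv_ok[OF psd, of m] unfolding Mi_def
  by (metis Amul matrix_vector_mul_assoc matrix_vector_mul_lid)

lemma Msym: assumes "m > 0" shows "x \<bullet> (Mi m *v y) = (Mi m *v x) \<bullet> y"
proof -
  let ?p = "Mi m *v x" and ?q = "Mi m *v y"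
  have "x \<bullet> ?q = (F *v ?p + m *\<^sub>R ?p) \<bullet> ?q" using AM[OF assms, of x] by simp
  also have "\<dots> = ?p \<bullet> (F *v ?q + m *\<^sub>R ?q)" by (simp add: inner_add_left inner_add_right sym)
  also have "\<dots> = ?p \<bullet> y" using AM[OF assms, of y] by simp
  finally show ?thesis .
qed

lemma Mcomm: assumes "m > 0" shows "Mi m *v (F *v y) = F *v (Mi m *v y)"
proof -
  have "F *v y = (F *v y + m *\<^sub>R y) - m *\<^sub>R y" by simp
  then have "Mi m *v (F *v y) = y - m *\<^sub>R (Mi m *v y)"
    by (metis MA[OF assms] matrix_vector_mult_diff_distrib matrix_vector_mult_scaleR)
  also have "\<dots> = F *v (Mi m *v y)" using AM[OF assms, of y] by (simp add: algebra_simps)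
  finally show ?thesis .
qed

lemma Mnorm: assumes "m > 0" shows "norm (Mi m *v y) \<le> norm y / m"
proof -
  let ?x = "Mi m *v y"
  have "m * (norm ?x)^2 \<le> ?x \<bullet> (F *v ?x) + m * (?x \<bullet> ?x)"
    using psd[of ?x] by (simp add: power2_norm_eq_inner)
  also have "\<dots> = ?x \<bullet> y" using AM[OF assms, of y] by (metis inner_add_right inner_scaleR_right)
  also have "\<dots> \<le> norm ?x * norm y" by (rule norm_cauchy_schwarz)
  finally have h: "m * (norm ?x)^2 \<le> norm ?x * norm y" .
  show ?thesis
  proof (cases "norm ?x = 0")
    case True then show ?thesis using assms by simp
  next
    case False
    then have "m * norm ?x \<le> norm y" using h by (simp add: power2_eq_square)
    then show ?thesis using assms by (simp add: field_simps mult.commute)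
  qed
qed

lemma Mres: assumes "m > 0" "l > 0"
  shows "Mi m *v y - Mi l *v y = (l - m) *\<^sub>R (Mi m *v (Mi l *v y))"
proof -
  let ?w = "Mi l *v y"
  have y: "y = F *v ?w + l *\<^sub>R ?w" using AM[OF assms(2)] by simp
  have w: "?w = Mi m *v (F *v ?w + m *\<^sub>R ?w)" using MA[OF assms(1)] by simp
  have "Mi m *v y - ?w = Mi m *v (y - (F *v ?w + m *\<^sub>R ?w))"
    using w by (metis matrix_vector_mult_diff_distrib)
  also have "y - (F *v ?w + m *\<^sub>R ?w) = (l - m) *\<^sub>R ?w" using y by (simp add: algebra_simps)
  finally show ?thesis by (simp add: matrix_vector_mult_scaleR)
qed

lemma Mcont: assumes l: "l > 0" shows "((\<lambda>m. Mi m *v w) \<longlongrightarrow> Mi l *v w) (at l)"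
proof -
  have ev: "\<forall>\<^sub>F m in at l. norm (Mi m *v w - Mi l *v w) \<le> \<bar>m - l\<bar> * (2 * norm (Mi l *v w) / l)"
  proof -
    have "\<forall>\<^sub>F m in at l. m > l / 2"
      using order_tendstoD(1)[OF tendsto_ident_at, of "l/2" l UNIV] l by simp
    then show ?thesis
    proof (rule eventually_mono)
      fix m assume m: "m > l / 2"
      then have mpos: "m > 0" using l by simp
      have b: "norm (Mi l *v w) / m \<le> 2 * norm (Mi l *v w) / l"
      proof -
        have "norm (Mi l *v w) * l \<le> 2 * norm (Mi l *v w) * m"
          using mult_left_mono[OF _ norm_ge_zero, of l "2*m" "Mi l *v w"] m by (simp add: ac_simps)
        then show ?thesis using mpos l by (simp add: field_simps)
      qed
      have "norm (Mi m *v w - Mi l *v w) = \<bar>l - m\<bar> * norm (Mi m *v (Mi l *v w))"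
        using Mres[OF mpos l] by simp
      also have "\<dots> \<le> \<bar>l - m\<bar> * (norm (Mi l *v w) / m)"
        by (intro mult_left_mono Mnorm mpos) simp
      also have "\<dots> \<le> \<bar>l - m\<bar> * (2 * norm (Mi l *v w) / l)"
        using b by (intro mult_left_mono) auto
      finally show "norm (Mi m *v w - Mi l *v w) \<le> \<bar>m - l\<bar> * (2 * norm (Mi l *v w) / l)"
        by (simp add: abs_minus_commute)
    qed
  qed
  have "((\<lambda>m. \<bar>m - l\<bar> * (2 * norm (Mi l *v w) / l)) \<longlongrightarrow> \<bar>l - l\<bar> * (2 * norm (Mi l *v w) / l)) (at l)"
    by (intro tendsto_intros)
  then have "((\<lambda>m. \<bar>m - l\<bar> * (2 * norm (Mi l *v w) / l)) \<longlongrightarrow> 0) (at l)" by simp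
  from Lim_null_comparison[OF ev this] show ?thesis by (simp add: LIM_zero_iff)
qed

lemma Mderiv: assumes l: "l > 0"
  shows "((\<lambda>m. Mi m *v y) has_derivative (\<lambda>h. h *\<^sub>R (- (Mi l *v (Mi l *v y))))) (at l)"
proof -
  let ?w = "Mi l *v y"
  have c: "((\<lambda>m. Mi m *v ?w - Mi l *v ?w) \<longlongrightarrow> 0) (at l)"
    using Mcont[OF l, of ?w] by (simp add: LIM_zero_iff)
  have ev: "\<forall>\<^sub>F m in at l. norm (((Mi m *v y - Mi l *v y) - (m - l) *\<^sub>R (- (Mi l *v ?w))) /\<^sub>R norm (m - l))
      \<le> norm (Mi m *v ?w - Mi l *v ?w)"
  proof -
    have "\<forall>\<^sub>F m in at l. m > 0" using order_tendstoD(1)[OF tendsto_ident_at, of 0 l UNIV] l by simp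
    moreover have "\<forall>\<^sub>F m in at l. m \<noteq> l" by (rule eventually_neq_at_within)
    ultimately have "\<forall>\<^sub>F m in at l. m > 0 \<and> m \<noteq> l" by (rule eventually_conj)
    then show ?thesis
    proof (rule eventually_mono)
      fix m assume m: "m > 0 \<and> m \<noteq> l"
      have "(Mi m *v y - Mi l *v y) - (m - l) *\<^sub>R (- (Mi l *v ?w)) = (l - m) *\<^sub>R (Mi m *v ?w - Mi l *v ?w)"
        using Mres[OF conjunct1[OF m] l] by (simp add: algebra_simps)
      then show "norm (((Mi m *v y - Mi l *v y) - (m - l) *\<^sub>R (- (Mi l *v ?w))) /\<^sub>R norm (m - l))
         \<le> norm (Mi m *v ?w - Mi l *v ?w)"
      proof -
        have "\<bar>inverse \<bar>m - l\<bar> * (l - m)\<bar> = 1" using m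
          by (simp add: abs_mult abs_minus_commute[of l m])
        then show ?thesis using m \<open>(Mi m *v y - Mi l *v y) - (m - l) *\<^sub>R (- (Mi l *v ?w)) = (l - m) *\<^sub>R (Mi m *v ?w - Mi l *v ?w)\<close> by simp
      qed
    qed
  qed
  have lim: "((\<lambda>m. ((Mi m *v y - Mi l *v y) - (m - l) *\<^sub>R (- (Mi l *v ?w))) /\<^sub>R norm (m - l)) \<longlongrightarrow> 0) (at l)"
    by (rule Lim_null_comparison[OF ev]) (rule tendsto_norm_zero[OF c])
  have bl: "bounded_linear (\<lambda>h. h *\<^sub>R (- (Mi l *v (Mi l *v y))))"
    by (rule bounded_linear_scaleR_left)
  show ?thesis by (rule has_derivative_at_within[THEN iffD2, OF conjI[OF bl lim]])
qed

lemma Dphi: assumes l: "l > 0"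
  shows "((\<lambda>m. u \<bullet> (Mi m *v w)) has_field_derivative (- (u \<bullet> (Mi l *v (Mi l *v w))))) (at l)"
proof -
  have d: "((\<lambda>m. u \<bullet> (Mi m *v w)) has_derivative (\<lambda>h. u \<bullet> (h *\<^sub>R (- (Mi l *v (Mi l *v w)))))) (at l)"
    by (rule bounded_linear.has_derivative[OF bounded_linear_inner_right Mderiv[OF l]])
  have e: "(\<lambda>h. u \<bullet> (h *\<^sub>R (- (Mi l *v (Mi l *v w))))) = (*) (- (u \<bullet> (Mi l *v (Mi l *v w))))"
    by (rule ext) simp
  show ?thesis unfolding has_field_derivative_def using d unfolding e .
qed

lemma DT2: assumes l: "l > 0"
  shows "((\<lambda>m. (Mi m *v p) \<bullet> (Mi m *v q)) has_field_derivative
     (- ((Mi l *v p) \<bullet> (Mi l *v (Mi l *v q))) - (Mi l *v (Mi l *v p)) \<bullet> (Mi l *v q))) (at l)"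
proof -
  have d: "((\<lambda>m. (Mi m *v p) \<bullet> (Mi m *v q)) has_derivative
     (\<lambda>h. (Mi l *v p) \<bullet> (h *\<^sub>R (- (Mi l *v (Mi l *v q)))) + (h *\<^sub>R (- (Mi l *v (Mi l *v p)))) \<bullet> (Mi l *v q))) (at l)"
    by (rule bounded_bilinear.FDERIV[OF bounded_bilinear_inner Mderiv[OF l] Mderiv[OF l]])
  have e: "(\<lambda>h. (Mi l *v p) \<bullet> (h *\<^sub>R (- (Mi l *v (Mi l *v q)))) + (h *\<^sub>R (- (Mi l *v (Mi l *v p)))) \<bullet> (Mi l *v q))
     = (*) (- ((Mi l *v p) \<bullet> (Mi l *v (Mi l *v q))) - (Mi l *v (Mi l *v p)) \<bullet> (Mi l *v q))"
    by (rule ext) (simp add: algebra_simps)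
  show ?thesis unfolding has_field_derivative_def using d unfolding e .
qed

end

lemma finite_ss: assumes "finite S" shows "finite (size_subsets S a)"
proof -
  have "size_subsets S a \<subseteq> Pow S" by (auto simp: size_subsets_def)
  then show ?thesis using assms finite_subset by blast
qed

lemma count_sup:
  assumes S: "finite S" and T: "T \<subseteq> S" and Ta: "card T \<le> a"
  shows "card {A \<in> size_subsets S a. T \<subseteq> A} = (card S - card T) choose (a - card T)"
proof -
  have fT: "finite T" using S T finite_subset by blast
  have bij: "bij_betw (\<lambda>B. B \<union> T) {B. B \<subseteq> S - T \<and> card B = a - card T} {A \<in> size_subsets S a. T \<subseteq> A}"
  proof (rule bij_betw_byWitness[where f'="\<lambda>A. A - T"])
    show "\<forall>B\<in>{B. B \<subseteq> S - T \<and> card B = a - card T}. B \<union> T - T = B" by auto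
    show "\<forall>A\<in>{A \<in> size_subsets S a. T \<subseteq> A}. A - T \<union> T = A" by auto
    show "(\<lambda>B. B \<union> T) ` {B. B \<subseteq> S - T \<and> card B = a - card T} \<subseteq> {A \<in> size_subsets S a. T \<subseteq> A}"
    proof (rule image_subsetI)
      fix B assume "B \<in> {B. B \<subseteq> S - T \<and> card B = a - card T}"
      then have B: "B \<subseteq> S - T" "card B = a - card T" by auto
      then have fB: "finite B" using S finite_subset by blast
      have "card (B \<union> T) = card B + card T" using B fB fT by (intro card_Un_disjoint) auto
      then show "B \<union> T \<in> {A \<in> size_subsets S a. T \<subseteq> A}" using B T Ta by (auto simp: size_subsets_def)
    qed
    show "(\<lambda>A. A - T) ` {A \<in> size_subsets S a. T \<subseteq> A} \<subseteq> {B. B \<subseteq> S - T \<and> card B = a - card T}"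
    proof (rule image_subsetI)
      fix A assume "A \<in> {A \<in> size_subsets S a. T \<subseteq> A}"
      then have A: "A \<subseteq> S" "T \<subseteq> A" "card A = a" by (auto simp: size_subsets_def)
      then show "A - T \<in> {B. B \<subseteq> S - T \<and> card B = a - card T}"
        using card_Diff_subset[OF fT A(2)] by auto
    qed
  qed
  have "card {A \<in> size_subsets S a. T \<subseteq> A} = card {B. B \<subseteq> S - T \<and> card B = a - card T}"
    using bij_betw_same_card[OF bij] by simp
  also have "\<dots> = card (S - T) choose (a - card T)" using S by (intro n_subsets) auto
  also have "card (S - T) = card S - card T" using card_Diff_subset[OF fT T] .
  finally show ?thesis .
qed

lemma count_big:
  assumes S: "finite S" and T: "T \<subseteq> S" and Ta: "card T > a"
  shows "{A \<in> size_subsets S a. T \<subseteq> A} = {}"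
proof -
  { fix A assume A: "A \<in> size_subsets S a" "T \<subseteq> A"
    then have "finite A" using S finite_subset unfolding size_subsets_def by blast
    then have "card T \<le> card A" using A card_mono by blast
    then have False using A Ta unfolding size_subsets_def by auto }
  then show ?thesis by blast
qed

lemma sum_swap_sets:
  assumes S: "finite S" and E: "finite E" and sub: "\<And>A. A \<in> E \<Longrightarrow> A \<subseteq> S"
  shows "(\<Sum>A\<in>E. \<Sum>\<zeta>\<in>A. f A \<zeta>) = (\<Sum>\<zeta>\<in>S. \<Sum>A\<in>{A\<in>E. \<zeta>\<in>A}. f A \<zeta>)"
proof -
  have "(\<Sum>A\<in>E. \<Sum>\<zeta>\<in>A. f A \<zeta>) = (\<Sum>A\<in>E. \<Sum>\<zeta>\<in>{\<zeta>\<in>S. \<zeta> \<in> A}. f A \<zeta>)"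
  proof (rule sum.cong[OF refl])
    fix A assume "A \<in> E"
    then have "{\<zeta>\<in>S. \<zeta> \<in> A} = A" using sub by blast
    then show "(\<Sum>\<zeta>\<in>A. f A \<zeta>) = (\<Sum>\<zeta>\<in>{\<zeta>\<in>S. \<zeta> \<in> A}. f A \<zeta>)" by simp
  qed
  also have "\<dots> = (\<Sum>\<zeta>\<in>S. \<Sum>A\<in>{A\<in>E. \<zeta>\<in>A}. f A \<zeta>)"
    by (rule sum.swap_restrict[OF E S])
  finally show ?thesis .
qed

locale subs =
  fixes S :: "'z set" and a :: nat
  assumes finS: "finite S" and a1: "1 \<le> a" and an: "a < card S"
begin

abbreviation "D \<equiv> size_subsets S a"
abbreviation "N0 \<equiv> real (card S choose a)"
abbreviation "N1 \<equiv> real ((card S - 1) choose (a - 1))"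
abbreviation "N2 \<equiv> (if 2 \<le> a then real ((card S - 2) choose (a - 2)) else 0)"

lemma finD: "finite D" using finite_ss[OF finS] .

lemma subD: "A \<in> D \<Longrightarrow> A \<subseteq> S" by (simp add: size_subsets_def)

lemma cardD: "card D = card S choose a"
  using count_sup[OF finS, of "{}" a] by simp

lemma N0pos: "N0 > 0" using an by simp

lemma card1: assumes "\<zeta> \<in> S" shows "card {A \<in> D. \<zeta> \<in> A} = (card S - 1) choose (a - 1)"
proof -
  have "{A \<in> D. \<zeta> \<in> A} = {A \<in> D. {\<zeta>} \<subseteq> A}" by auto
  then show ?thesis using count_sup[OF finS, of "{\<zeta>}" a] assms a1 by simp
qed

lemma N1pos: "N1 > 0" using an a1 by simp

lemma card2: assumes "\<zeta> \<in> S" "\<eta> \<in> S"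
  shows "real (card {A \<in> {A \<in> D. \<zeta> \<in> A}. \<eta> \<in> A}) = (if \<eta> = \<zeta> then N1 else N2)"
proof (cases "\<eta> = \<zeta>")
  case True
  then have "{A \<in> {A \<in> D. \<zeta> \<in> A}. \<eta> \<in> A} = {A \<in> D. \<zeta> \<in> A}" by auto
  then show ?thesis using card1[OF assms(1)] True by simp
next
  case False
  have e: "{A \<in> {A \<in> D. \<zeta> \<in> A}. \<eta> \<in> A} = {A \<in> D. {\<zeta>, \<eta>} \<subseteq> A}" by auto
  have c: "card {\<zeta>, \<eta>} = 2" using False by simp
  show ?thesis
  proof (cases "2 \<le> a")
    case True
    have "card {A \<in> D. {\<zeta>, \<eta>} \<subseteq> A} = (card S - card {\<zeta>, \<eta>}) choose (a - card {\<zeta>, \<eta>})"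
      by (rule count_sup[OF finS]) (use assms c True in auto)
    then show ?thesis using False True unfolding e c by simp
  next
    case f2: False
    have emp: "{A \<in> D. {\<zeta>, \<eta>} \<subseteq> A} = {}"
      by (rule count_big[OF finS]) (use assms c f2 in auto)
    show ?thesis using False f2 by (simp only: e emp card.empty) simp
  qed
qed

lemma N1N2: "N1 > N2"
proof (cases "2 \<le> a")
  case True
  have "card S - 1 = Suc (card S - 2)" "a - 1 = Suc (a - 2)" using True an by auto
  then have "((card S - 1) choose (a - 1)) = ((card S - 2) choose (a - 2)) + ((card S - 2) choose (a - 1))"
    by simp
  moreover have "(card S - 2) choose (a - 1) > 0" using True an by simp
  ultimately show ?thesis using True by simp
next
  case False
  then show ?thesis using N1pos by simp
qed

lemma sumY: "(\<Sum>A\<in>D. \<Sum>\<zeta>\<in>A. b \<zeta>) = N1 * (\<Sum>\<zeta>\<in>S. b \<zeta>)"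
proof -
  have "(\<Sum>A\<in>D. \<Sum>\<zeta>\<in>A. b \<zeta>) = (\<Sum>\<zeta>\<in>S. \<Sum>A\<in>{A\<in>D. \<zeta>\<in>A}. b \<zeta>)"
    by (rule sum_swap_sets[OF finS finD subD])
  also have "\<dots> = (\<Sum>\<zeta>\<in>S. N1 * b \<zeta>)"
    by (rule sum.cong[OF refl]) (simp add: card1)
  finally show ?thesis by (simp add: sum_distrib_left)
qed

lemma EY: assumes "(\<Sum>\<zeta>\<in>S. b \<zeta>) = 0" shows "unif_exp D (\<lambda>A. \<Sum>\<zeta>\<in>A. b \<zeta>) = 0"
  unfolding unif_exp_def sumY assms by simp

lemma VarY: assumes b0: "(\<Sum>\<zeta>\<in>S. b \<zeta>) = 0"
  shows "unif_var D (\<lambda>A. \<Sum>\<zeta>\<in>A. b \<zeta>) = ((N1 - N2) / N0) * (\<Sum>\<zeta>\<in>S. (b \<zeta>)\<^sup>2)"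
proof -
  have "(\<Sum>A\<in>D. (\<Sum>\<zeta>\<in>A. b \<zeta>)\<^sup>2) = (\<Sum>A\<in>D. \<Sum>\<zeta>\<in>A. \<Sum>\<eta>\<in>A. b \<zeta> * b \<eta>)"
    by (simp add: power2_eq_square sum_product)
  also have "\<dots> = (\<Sum>\<zeta>\<in>S. \<Sum>A\<in>{A\<in>D. \<zeta>\<in>A}. \<Sum>\<eta>\<in>A. b \<zeta> * b \<eta>)"
    by (rule sum_swap_sets[OF finS finD subD])
  also have "\<dots> = (\<Sum>\<zeta>\<in>S. \<Sum>\<eta>\<in>S. \<Sum>A\<in>{A\<in>{A\<in>D. \<zeta>\<in>A}. \<eta>\<in>A}. b \<zeta> * b \<eta>)"
    by (rule sum.cong[OF refl], rule sum_swap_sets[OF finS]) (use finD subD in auto)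
  also have "\<dots> = (\<Sum>\<zeta>\<in>S. \<Sum>\<eta>\<in>S. b \<zeta> * b \<eta> * (N2 + (if \<eta> = \<zeta> then N1 - N2 else 0)))"
  proof (intro sum.cong refl)
    fix \<zeta> \<eta> assume z: "\<zeta> \<in> S" and e: "\<eta> \<in> S"
    have "(\<Sum>A\<in>{A\<in>{A\<in>D. \<zeta>\<in>A}. \<eta>\<in>A}. b \<zeta> * b \<eta>) = real (card {A\<in>{A\<in>D. \<zeta>\<in>A}. \<eta>\<in>A}) * (b \<zeta> * b \<eta>)"
      by simp
    also have "\<dots> = b \<zeta> * b \<eta> * (N2 + (if \<eta> = \<zeta> then N1 - N2 else 0))"
      unfolding card2[OF z e] by (cases "\<eta> = \<zeta>") auto
    finally show "(\<Sum>A\<in>{A\<in>{A\<in>D. \<zeta>\<in>A}. \<eta>\<in>A}. b \<zeta> * b \<eta>) = b \<zeta> * b \<eta> * (N2 + (if \<eta> = \<zeta> then N1 - N2 else 0))" .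
  qed
  also have "\<dots> = (\<Sum>\<zeta>\<in>S. b \<zeta> * N2 * (\<Sum>\<eta>\<in>S. b \<eta>) + (N1 - N2) * (b \<zeta>)\<^sup>2)"
  proof (rule sum.cong[OF refl])
    fix \<zeta> assume z: "\<zeta> \<in> S"
    have "(\<Sum>\<eta>\<in>S. b \<zeta> * b \<eta> * (N2 + (if \<eta> = \<zeta> then N1 - N2 else 0)))
       = (\<Sum>\<eta>\<in>S. b \<zeta> * N2 * b \<eta> + (if \<eta> = \<zeta> then (N1 - N2) * (b \<zeta>)\<^sup>2 else 0))"
      by (rule sum.cong[OF refl]) (auto simp: algebra_simps power2_eq_square)
    also have "\<dots> = b \<zeta> * N2 * (\<Sum>\<eta>\<in>S. b \<eta>) + (N1 - N2) * (b \<zeta>)\<^sup>2"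
      by (simp add: sum.distrib sum_distrib_left finS z)
    finally show "(\<Sum>\<eta>\<in>S. b \<zeta> * b \<eta> * (N2 + (if \<eta> = \<zeta> then N1 - N2 else 0)))
       = b \<zeta> * N2 * (\<Sum>\<eta>\<in>S. b \<eta>) + (N1 - N2) * (b \<zeta>)\<^sup>2" .
  qed
  also have "\<dots> = (N1 - N2) * (\<Sum>\<zeta>\<in>S. (b \<zeta>)\<^sup>2)" by (simp add: b0 sum.distrib sum_distrib_left)
  finally have h: "(\<Sum>A\<in>D. (\<Sum>\<zeta>\<in>A. b \<zeta>)\<^sup>2) = (N1 - N2) * (\<Sum>\<zeta>\<in>S. (b \<zeta>)\<^sup>2)" .
  show ?thesis unfolding unif_var_def EY[OF b0] using h by (simp add: unif_exp_def cardD)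
qed

lemma CovY: assumes b0: "(\<Sum>\<zeta>\<in>S. b \<zeta>) = 0"
  shows "unif_cov D X (\<lambda>A. \<Sum>\<zeta>\<in>A. b \<zeta>) =
    (N1 / N0) * (\<Sum>\<zeta>\<in>S. b \<zeta> * (unif_exp {A \<in> D. \<zeta> \<in> A} X - unif_exp D X))"
proof -
  let ?E = "unif_exp D X"
  have "(\<Sum>A\<in>D. (X A - ?E) * (\<Sum>\<zeta>\<in>A. b \<zeta>)) = (\<Sum>A\<in>D. \<Sum>\<zeta>\<in>A. (X A - ?E) * b \<zeta>)"
    by (simp add: sum_distrib_left)
  also have "\<dots> = (\<Sum>\<zeta>\<in>S. \<Sum>A\<in>{A\<in>D. \<zeta>\<in>A}. (X A - ?E) * b \<zeta>)"
    by (rule sum_swap_sets[OF finS finD subD])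
  also have "\<dots> = (\<Sum>\<zeta>\<in>S. N1 * (b \<zeta> * (unif_exp {A \<in> D. \<zeta> \<in> A} X - ?E)))"
  proof (rule sum.cong[OF refl])
    fix \<zeta> assume z: "\<zeta> \<in> S"
    have "(\<Sum>A\<in>{A\<in>D. \<zeta>\<in>A}. X A) = N1 * unif_exp {A \<in> D. \<zeta> \<in> A} X"
      unfolding unif_exp_def card1[OF z] using N1pos by simp
    then show "(\<Sum>A\<in>{A\<in>D. \<zeta>\<in>A}. (X A - ?E) * b \<zeta>) = N1 * (b \<zeta> * (unif_exp {A \<in> D. \<zeta> \<in> A} X - ?E))"
      by (simp add: sum_distrib_right[symmetric] sum_subtractf card1[OF z] algebra_simps)
  qed
  finally have h: "(\<Sum>A\<in>D. (X A - ?E) * (\<Sum>\<zeta>\<in>A. b \<zeta>)) = N1 * (\<Sum>\<zeta>\<in>S. b \<zeta> * (unif_exp {A \<in> D. \<zeta> \<in> A} X - ?E))"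
    by (simp add: sum_distrib_left)
  show ?thesis unfolding unif_cov_def EY[OF b0] using h by (simp add: unif_exp_def cardD)
qed

end



lemma outer_mv: "outer u u *v x = (u \<bullet> x) *\<^sub>R u"
  by (simp add: vec_eq_iff matrix_vector_mult_def outer_def inner_vec_def sum_distrib_left ac_simps)

lemma sum_mv: "(\<Sum>i\<in>I. A i) *v (x::real^'p) = (\<Sum>i\<in>I. A i *v x)"
  unfolding vec_eq_iff matrix_vector_mult_def sum_component
  by (simp add: sum_distrib_right sum.swap[of _ UNIV])

lemma fisher_mv: "fisher L z n \<theta> *v x = (1 / real n) *\<^sub>R (\<Sum>i<n. (grad (L (z i)) \<theta> \<bullet> x) *\<^sub>R grad (L (z i)) \<theta>)"
  unfolding fisher_def scaleR_matrix_vector_assoc[symmetric] sum_mv outer_mv ..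

lemma fisher_quad: "y \<bullet> (fisher L z n \<theta> *v x) = (1 / real n) * (\<Sum>i<n. (grad (L (z i)) \<theta> \<bullet> y) * (grad (L (z i)) \<theta> \<bullet> x))"
  unfolding fisher_mv by (simp add: inner_sum_right inner_commute ac_simps)

lemma fisher_reg: "reg (fisher L z n \<theta>)"
proof
  fix x :: "real^'a"
  have "0 \<le> (\<Sum>i<n. (grad (L (z i)) \<theta> \<bullet> x) * (grad (L (z i)) \<theta> \<bullet> x))"
    by (rule sum_nonneg) simp
  then show "0 \<le> x \<bullet> (fisher L z n \<theta> *v x)" unfolding fisher_quad by simp
next
  fix p q :: "real^'a"
  show "(fisher L z n \<theta> *v p) \<bullet> q = p \<bullet> (fisher L z n \<theta> *v q)"
    using fisher_quad[of q L z n \<theta> p] fisher_quad[of p L z n \<theta> q]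
    by (simp add: inner_commute ac_simps)
qed

theorem mainTheorem2:
  fixes L :: "'z \<Rightarrow> real^'p \<Rightarrow> real"
    and z :: "nat \<Rightarrow> 'z"
    and n a :: nat
    and \<theta>S :: "real^'p"
    and \<theta>A :: "'z set \<Rightarrow> real^'p"
    and z' :: 'z
    and lam :: real
  assumes n2: "n \<ge> 2"
    and inj: "inj_on z {..<n}"
    and Lpos: "\<And>\<zeta> \<theta>. L \<zeta> \<theta> > 0"
    and Ldiff: "\<And>\<zeta> \<theta>. L \<zeta> differentiable (at \<theta>)"
    and stat: "(\<Sum>i<n. grad (L (z i)) \<theta>S) = 0"
    and a1: "1 \<le> a" and an: "a < n"
    and lam_pos: "lam > 0"
    and Fgf: "fisher L z n \<theta>S *v grad (logit_f L z') \<theta>S \<noteq> 0"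
    and varpos: "unif_var (size_subsets (z ` {..<n}) a) (\<lambda>A. logit_f L z' (\<theta>A A)) > 0"
  shows "deriv (c_p L z n a \<theta>S \<theta>A z') lam > 0 \<longleftrightarrow>
         r_val L z n a \<theta>S \<theta>A z' lam * t_val 3 L z n \<theta>S z' lam
         > (- (grad (logit_f L z') \<theta>S \<bullet>
               (mpow (reg_inv L z n \<theta>S lam) 2 *v g_vec L z n a \<theta>S \<theta>A z')))
           * t_val 2 L z n \<theta>S z' lam"
  proof -
  define F where "F = fisher L z n \<theta>S"
  define v where "v = grad (logit_f L z') \<theta>S"
  define S where "S = z ` {..<n}"
  define X where "X = (\<lambda>A. logit_f L z' (\<theta>A A))"
  define g where "g = g_vec L z n a \<theta>S \<theta>A z'"
  define D where "D = size_subsets S a"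
  interpret R: reg F unfolding F_def by (rule fisher_reg)
  have cardS: "card S = n" unfolding S_def using card_image[OF inj] by simp
  interpret Sb: subs S a using cardS a1 an unfolding S_def by unfold_locales auto
  define N0 where "N0 = real (card S choose a)"
  define N1 where "N1 = real ((card S - 1) choose (a - 1))"
  define N2 where "N2 = (if 2 \<le> a then real ((card S - 2) choose (a - 2)) else 0)"
  have N0pos: "N0 > 0" unfolding N0_def using Sb.N0pos .
  have N1pos: "N1 > 0" unfolding N1_def using Sb.N1pos .
  have N12: "N1 - N2 > 0" unfolding N1_def N2_def using Sb.N1N2 by simp
  have Mreg: "\<And>\<mu>. reg_inv L z n \<theta>S \<mu> = R.Mi \<mu>" unfolding R.Mi_def unfolding reg_inv_def F_def ..
  have npos: "real n > 0" using n2 by simp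
  define b where "b = (\<lambda>\<mu> \<zeta>. tau L z n \<theta>S \<mu> z' \<zeta>)"
  have b_eq: "\<And>\<mu> \<zeta>. b \<mu> \<zeta> = - (v \<bullet> (R.Mi \<mu> *v grad (L \<zeta>) \<theta>S))"
    unfolding b_def tau_def Mreg v_def ..
  have sumS: "\<And>h. (\<Sum>\<zeta>\<in>S. h \<zeta>) = (\<Sum>i<n. h (z i))"
    unfolding S_def by (simp add: sum.reindex[OF inj])
  have b0: "(\<Sum>\<zeta>\<in>S. b \<mu> \<zeta>) = 0" for \<mu>
  proof -
    have "(\<Sum>\<zeta>\<in>S. b \<mu> \<zeta>) = - (v \<bullet> (R.Mi \<mu> *v (\<Sum>i<n. grad (L (z i)) \<theta>S)))"
      unfolding sumS b_eq by (simp add: vec.sum inner_sum_right sum_negf)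
    then show ?thesis using stat by simp
  qed
  define r where "r = (\<lambda>\<mu>. - (v \<bullet> (R.Mi \<mu> *v g)))"
  define T2 where "T2 = (\<lambda>\<mu>. (R.Mi \<mu> *v v) \<bullet> (R.Mi \<mu> *v (F *v v)))"
  have cov: "unif_cov D X (\<lambda>A. \<Sum>\<zeta>\<in>A. b \<mu> \<zeta>) = (N1 / N0) * (real n * r \<mu>)" for \<mu>
  proof -
    have "unif_cov D X (\<lambda>A. \<Sum>\<zeta>\<in>A. b \<mu> \<zeta>) =
      (N1 / N0) * (\<Sum>\<zeta>\<in>S. b \<mu> \<zeta> * (unif_exp {A \<in> D. \<zeta> \<in> A} X - unif_exp D X))"
      unfolding D_def N1_def N0_def by (rule Sb.CovY[OF b0])
    also have "(\<Sum>\<zeta>\<in>S. b \<mu> \<zeta> * (unif_exp {A \<in> D. \<zeta> \<in> A} X - unif_exp D X))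
       = (\<Sum>i<n. - (v \<bullet> (R.Mi \<mu> *v (alpha L z n a \<theta>A z' i *\<^sub>R grad (L (z i)) \<theta>S))))"
      unfolding sumS unfolding b_eq alpha_def D_def S_def X_def
      by (simp add: matrix_vector_mult_scaleR ac_simps)
    also have "\<dots> = - (v \<bullet> (R.Mi \<mu> *v (\<Sum>i<n. alpha L z n a \<theta>A z' i *\<^sub>R grad (L (z i)) \<theta>S)))"
      by (simp add: vec.sum inner_sum_right sum_negf)
    also have "(\<Sum>i<n. alpha L z n a \<theta>A z' i *\<^sub>R grad (L (z i)) \<theta>S) = real n *\<^sub>R g"
      unfolding g_def g_vec_def using npos by simp
    finally show ?thesis unfolding r_def by (simp add: matrix_vector_mult_scaleR)
  qed
  have var: "unif_var D (\<lambda>A. \<Sum>\<zeta>\<in>A. b \<mu> \<zeta>) = ((N1 - N2) / N0) * (real n * T2 \<mu>)" if mu: "\<mu> > 0" for \<mu>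
  proof -
    have "unif_var D (\<lambda>A. \<Sum>\<zeta>\<in>A. b \<mu> \<zeta>) = ((N1 - N2) / N0) * (\<Sum>\<zeta>\<in>S. (b \<mu> \<zeta>)\<^sup>2)"
      unfolding D_def N1_def N0_def N2_def by (rule Sb.VarY[OF b0])
    also have "(\<Sum>\<zeta>\<in>S. (b \<mu> \<zeta>)\<^sup>2) = (\<Sum>i<n. (grad (L (z i)) \<theta>S \<bullet> (R.Mi \<mu> *v v)) * (grad (L (z i)) \<theta>S \<bullet> (R.Mi \<mu> *v v)))"
    proof -
      have e: "v \<bullet> (R.Mi \<mu> *v w) = w \<bullet> (R.Mi \<mu> *v v)" for w
      proof -
        have "v \<bullet> (R.Mi \<mu> *v w) = (R.Mi \<mu> *v v) \<bullet> w" by (rule R.Msym[OF mu])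
        also have "\<dots> = w \<bullet> (R.Mi \<mu> *v v)" by (rule inner_commute)
        finally show ?thesis .
      qed
      show ?thesis unfolding sumS unfolding b_eq e by (simp add: power2_eq_square)
    qed
    also have "\<dots> = real n * ((R.Mi \<mu> *v v) \<bullet> (F *v (R.Mi \<mu> *v v)))"
      unfolding F_def fisher_quad using npos by simp
    also have "F *v (R.Mi \<mu> *v v) = R.Mi \<mu> *v (F *v v)" using R.Mcomm[OF mu] by simp
    finally show ?thesis unfolding T2_def .
  qed
  define VX where "VX = unif_var D X"
  have VXpos: "VX > 0" using varpos unfolding VX_def D_def S_def X_def .
  define K where "K = (N1 / N0 * real n) / (sqrt VX * sqrt ((N1 - N2) / N0 * real n))"
  have Kpos: "K > 0" unfolding K_def using N0pos N1pos N12 npos VXpos by simp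
  have cp_eq: "K * r \<mu> / sqrt (T2 \<mu>) = c_p L z n a \<theta>S \<theta>A z' \<mu>" if mu: "\<mu> > 0" for \<mu>
  proof -
    have "c_p L z n a \<theta>S \<theta>A z' \<mu> = pearson D X (\<lambda>A. \<Sum>\<zeta>\<in>A. b \<mu> \<zeta>)"
      unfolding c_p_def D_def S_def X_def b_def ..
    also have "\<dots> = ((N1 / N0) * (real n * r \<mu>)) / (sqrt VX * sqrt (((N1 - N2) / N0) * (real n * T2 \<mu>)))"
      unfolding pearson_def cov var[OF mu] VX_def ..
    also have "sqrt (((N1 - N2) / N0) * (real n * T2 \<mu>)) = sqrt ((N1 - N2) / N0 * real n) * sqrt (T2 \<mu>)"
      by (simp add: real_sqrt_mult[symmetric] mult.assoc)
    also have "(N1 / N0) * (real n * r \<mu>) / (sqrt VX * (sqrt ((N1 - N2) / N0 * real n) * sqrt (T2 \<mu>)))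
        = K * r \<mu> / sqrt (T2 \<mu>)"
      unfolding K_def by (simp add: divide_inverse inverse_mult_distrib mult_ac)
    finally show ?thesis by simp
  qed
  define M where "M = R.Mi lam"
  define t3 where "t3 = v \<bullet> (M *v (M *v (M *v (F *v v))))"
  define sv where "sv = - (v \<bullet> (M *v (M *v g)))"
  have T2alt: "T2 lam = v \<bullet> (M *v (M *v (F *v v)))"
    unfolding T2_def M_def using R.Msym[OF lam_pos, of v "R.Mi lam *v (F *v v)"] by simp
  have T2pos: "T2 lam > 0"
  proof -
    have "T2 lam = (M *v v) \<bullet> (F *v (M *v v))"
      unfolding T2_def M_def using R.Mcomm[OF lam_pos] by simp
    also have "\<dots> = (1 / real n) * (\<Sum>i<n. (grad (L (z i)) \<theta>S \<bullet> (M *v v)) * (grad (L (z i)) \<theta>S \<bullet> (M *v v)))"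
      unfolding F_def fisher_quad ..
    finally have T2s: "T2 lam = (1 / real n) * (\<Sum>i<n. (grad (L (z i)) \<theta>S \<bullet> (M *v v)) * (grad (L (z i)) \<theta>S \<bullet> (M *v v)))" .
    have nn: "0 \<le> (\<Sum>i<n. (grad (L (z i)) \<theta>S \<bullet> (M *v v)) * (grad (L (z i)) \<theta>S \<bullet> (M *v v)))"
      by (rule sum_nonneg) simp
    show ?thesis
    proof (rule ccontr)
      assume "\<not> T2 lam > 0"
      then have "(\<Sum>i<n. (grad (L (z i)) \<theta>S \<bullet> (M *v v)) * (grad (L (z i)) \<theta>S \<bullet> (M *v v))) = 0"
      proof -
        have "(\<Sum>i<n. (grad (L (z i)) \<theta>S \<bullet> (M *v v)) * (grad (L (z i)) \<theta>S \<bullet> (M *v v))) > 0 \<Longrightarrow> T2 lam > 0"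
          using T2s npos by simp
        then show ?thesis using nn \<open>\<not> T2 lam > 0\<close> by linarith
      qed
      then have z0: "\<And>i. i < n \<Longrightarrow> grad (L (z i)) \<theta>S \<bullet> (M *v v) = 0"
        using sum_nonneg_eq_0_iff[of "{..<n}" "\<lambda>i. (grad (L (z i)) \<theta>S \<bullet> (M *v v)) * (grad (L (z i)) \<theta>S \<bullet> (M *v v))"]
        by simp
      have "F *v (M *v v) = 0" unfolding F_def fisher_mv using z0 by simp
      then have "M *v (F *v v) = 0" unfolding M_def using R.Mcomm[OF lam_pos] by simp
      then have "F *v v = 0" using R.AM[OF lam_pos, of "F *v v"] unfolding M_def by simp
      then show False using Fgf unfolding F_def v_def by simp
    qed
  qed
  have dr: "(r has_field_derivative (- sv)) (at lam)"
    using DERIV_minus[OF R.Dphi[OF lam_pos, of v g]] unfolding r_def sv_def M_def by simp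
  have dT: "(T2 has_field_derivative (- 2 * t3)) (at lam)"
  proof -
    have e1: "(M *v v) \<bullet> (M *v (M *v (F *v v))) = t3"
      unfolding t3_def M_def using R.Msym[OF lam_pos, of v "R.Mi lam *v (R.Mi lam *v (F *v v))"] by simp
    have e2: "(M *v (M *v v)) \<bullet> (M *v (F *v v)) = t3"
      unfolding e1[symmetric] M_def using R.Msym[OF lam_pos, of "R.Mi lam *v v" "R.Mi lam *v (F *v v)"] by simp
    show ?thesis using R.DT2[OF lam_pos, of v "F *v v"] unfolding T2_def[symmetric] M_def[symmetric] e1 e2
      by simp
  qed
  have dsq: "((\<lambda>\<mu>. sqrt (T2 \<mu>)) has_field_derivative (inverse (sqrt (T2 lam)) / 2 * (- 2 * t3))) (at lam)"
    by (rule DERIV_chain2[OF DERIV_real_sqrt[OF T2pos] dT])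
  have dK: "((\<lambda>\<mu>. K * r \<mu>) has_field_derivative K * (- sv)) (at lam)"
    by (rule DERIV_cmult[OF dr])
  define dd where "dd = (K * (- sv) * sqrt (T2 lam) - K * r lam * (inverse (sqrt (T2 lam)) / 2 * (- 2 * t3)))
      / (sqrt (T2 lam) * sqrt (T2 lam))"
  have dq: "((\<lambda>\<mu>. K * r \<mu> / sqrt (T2 \<mu>)) has_field_derivative dd) (at lam)"
    unfolding dd_def by (rule DERIV_divide[OF dK dsq]) (use T2pos in simp)
  have dc: "(c_p L z n a \<theta>S \<theta>A z' has_field_derivative dd) (at lam)"
    by (rule has_field_derivative_transform_within_open[OF dq, of "{0<..}"]) (use lam_pos cp_eq in auto)
  have deq: "deriv (c_p L z n a \<theta>S \<theta>A z') lam = dd" by (rule DERIV_imp_deriv[OF dc])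
  have g1: "r_val L z n a \<theta>S \<theta>A z' lam = r lam"
    unfolding r_val_def r_def Mreg v_def g_def ..
  have g2: "t_val 3 L z n \<theta>S z' lam = t3"
    unfolding t_val_def t3_def Mreg M_def F_def v_def
    by (simp add: numeral_3_eq_3 matrix_vector_mul_assoc[symmetric])
  have g3: "t_val 2 L z n \<theta>S z' lam = T2 lam"
    unfolding T2alt t_val_def Mreg M_def F_def v_def
    by (simp add: numeral_2_eq_2 matrix_vector_mul_assoc[symmetric])
  have g4: "- (grad (logit_f L z') \<theta>S \<bullet> (mpow (reg_inv L z n \<theta>S lam) 2 *v g_vec L z n a \<theta>S \<theta>A z')) = sv"
    unfolding sv_def Mreg M_def v_def g_def
    by (simp add: numeral_2_eq_2 matrix_vector_mul_assoc[symmetric])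
  define q where "q = sqrt (T2 lam)"
  have qpos: "q > 0" unfolding q_def using T2pos by simp
  have qq: "T2 lam = q * q" unfolding q_def using T2pos by simp
  have ddf: "dd = (K / (q * q * q)) * (r lam * t3 - sv * T2 lam)"
    unfolding dd_def q_def[symmetric] qq using qpos by (simp add: field_simps)
  have Kq: "K / (q * q * q) > 0" using Kpos qpos by simp
  have "0 < dd \<longleftrightarrow> 0 < r lam * t3 - sv * T2 lam"
    unfolding ddf using Kq zero_less_mult_pos[of "K / (q * q * q)"] mult_pos_pos by blast
  then have "0 < dd \<longleftrightarrow> sv * T2 lam < r lam * t3" by linarith
  then show ?thesis unfolding deq g1 g2 g3 g4 .
qed

end
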